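(* Let $(W,S)$, $\Gamma$, $L$ be as in the context and let $E\mapsto\tilde{a}_E$ be the function defined recursively there. Then for every $E\in\mathrm{Irr}(W)$ we have $\tilde a_E\ge\tilde a'_E\ge 0$ and $\tilde a_{E\otimes\mathrm{sgn}}-\tilde a_E=\omega_L(E)$. Moreover, if $J\subsetneqq S$, $M\in\mathrm{Irr}(W_J)$ and $E$ is an irreducible constituent of the representation induced from $M$, then $\tilde a_E\ge\tilde a_M$.
   Context: $(W,S)$ is a finite Coxeter group with length function $l$. $\Gamma$ is an abelian group with a total order $\le$ compatible with addition. $L\colon W\to\Gamma$ is a weight function: $L(ww')=L(w)+L(w')$ whenever $l(ww')=l(w)+l(w')$; assume $L(s)\ge 0$ for all $s\in S$. For $J\subseteq S$, $W_J$ is the parabolic subgroup generated by $J$ (a Coxeter group with generators $J$), and $L$ restricts to a weight function on it. $\mathrm{Irr}(W)$ is the set of complex irreducible representations of $W$; $\mathrm{sgn}$ is the sign representation. Let $S'\subseteq S$ be a set of representatives of the conjugacy classes of $W$ contained in $T=\{wsw^{-1}\}$, and $N_s$ the size of the class of $s$; set $\omega_L(E):=\sum_{s\in S'}\frac{N_s\,\mathrm{trace}(s,E)}{\dim E}L(s)\in\Gamma$ (these coefficients are integers). For $M\in\mathrm{Irr}(W_J)$, write $M\uparrow E$ if $E$ is a constituent of $\mathrm{Ind}_{W_J}^W M$. Definition of $\tilde a$ (recursively over parabolic subgroups): if $W=\{1\}$, $\tilde a_{1_W}:=0$. Otherwise, assuming $\tilde a$ defined for all $W_J$, $J\subsetneqq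 S$, set $\tilde a'_E:=\max\{\tilde a_M\mid M\in\mathrm{Irr}(W_J),\ J\subsetneqq S,\ M\uparrow E\}$, and $\tilde a_E:=\tilde a'_E$ if $\tilde a'_{E\otimes\mathrm{sgn}}-\tilde a'_E\le\omega_L(E)$, and $\tilde a_E:=\tilde a'_{E\otimes\mathrm{sgn}}-\omega_L(E)$ otherwise. *)

theory Defs
  imports "HOL-Algebra.Multiplicative_Group" "HOL-Algebra.Generated_Groups"
          "Jordan_Normal_Form.Matrix"
begin

definition wprod :: "('a, 'b) monoid_scheme \<Rightarrow> 'a list \<Rightarrow> 'a" where
  "wprod G ws = foldr (\<lambda>x y. x \<otimes>\<^bsub>G\<^esub> y) ws \<one>\<^bsub>G\<^esub>"

definition rel_step :: "('a list \<times> 'a list) set \<Rightarrow> 'a list \<Rightarrow> 'a list \<Rightarrow> bool" where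
  "rel_step R u v \<longleftrightarrow> (\<exists>a b x y. (x, y) \<in> R \<and> u = a @ x @ b \<and> v = a @ y @ b)"

definition word_cong :: "('a list \<times> 'a list) set \<Rightarrow> 'a list \<Rightarrow> 'a list \<Rightarrow> bool" where
  "word_cong R = (\<lambda>u v. rel_step R u v \<or> rel_step R v u)\<^sup>*\<^sup>*"

definition coxeter_rels :: "('a, 'b) monoid_scheme \<Rightarrow> 'a set \<Rightarrow> ('a list \<times> 'a list) set" where
  "coxeter_rels G S =
     {(concat (replicate (group.ord G (s \<otimes>\<^bsub>G\<^esub> t)) [s, t]), []) | s t. s \<in> S \<and> t \<in> S}"

text \<open>(G,S) is a Coxeter system: S is a generating set of involutions of G and G has the
  presentation \<open>\<langle>S | (st)^{m_{st}} = 1\<rangle>\<close>, i.e. two words in S have the same product iff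
  they are equivalent under the congruence generated by the Coxeter relations.\<close>
definition coxeter_system :: "('a, 'b) monoid_scheme \<Rightarrow> 'a set \<Rightarrow> bool" where
  "coxeter_system G S \<longleftrightarrow> group G \<and> S \<subseteq> carrier G \<and> generate G S = carrier G \<and>
     (\<forall>s\<in>S. s \<noteq> \<one>\<^bsub>G\<^esub> \<and> s \<otimes>\<^bsub>G\<^esub> s = \<one>\<^bsub>G\<^esub>) \<and>
     (\<forall>u\<in>lists S. \<forall>v\<in>lists S. wprod G u = wprod G v \<longleftrightarrow> word_cong (coxeter_rels G S) u v)"

definition clen :: "('a, 'b) monoid_scheme \<Rightarrow> 'a set \<Rightarrow> 'a \<Rightarrow> nat" where
  "clen G J w = (LEAST n. \<exists>ws\<in>lists J. length ws = n \<and> wprod G ws = w)"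

abbreviation parab :: "('a, 'b) monoid_scheme \<Rightarrow> 'a set \<Rightarrow> 'a set" where
  "parab G J \<equiv> generate G J"

definition weight_function :: "('a, 'b) monoid_scheme \<Rightarrow> 'a set \<Rightarrow> ('a \<Rightarrow> 'g::ab_group_add) \<Rightarrow> bool" where
  "weight_function G S L \<longleftrightarrow> (\<forall>w\<in>carrier G. \<forall>w'\<in>carrier G.
      clen G S (w \<otimes>\<^bsub>G\<^esub> w') = clen G S w + clen G S w' \<longrightarrow> L (w \<otimes>\<^bsub>G\<^esub> w') = L w + L w')"

definition mtrace :: "complex mat \<Rightarrow> complex" where
  "mtrace A = (\<Sum>i<dim_row A. A $$ (i, i))"

definition is_rep :: "('a, 'b) monoid_scheme \<Rightarrow> 'a set \<Rightarrow> nat \<Rightarrow> ('a \<Rightarrow> complex mat) \<Rightarrow> bool" where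
  "is_rep G H n \<rho> \<longleftrightarrow> (\<forall>h\<in>H. \<rho> h \<in> carrier_mat n n) \<and> \<rho> \<one>\<^bsub>G\<^esub> = 1\<^sub>m n \<and>
     (\<forall>g\<in>H. \<forall>h\<in>H. \<rho> (g \<otimes>\<^bsub>G\<^esub> h) = \<rho> g * \<rho> h)"

definition is_subspace :: "nat \<Rightarrow> complex vec set \<Rightarrow> bool" where
  "is_subspace n U \<longleftrightarrow> U \<subseteq> carrier_vec n \<and> 0\<^sub>v n \<in> U \<and>
     (\<forall>u\<in>U. \<forall>v\<in>U. u + v \<in> U) \<and> (\<forall>c. \<forall>u\<in>U. c \<cdot>\<^sub>v u \<in> U)"

definition is_irrep :: "('a, 'b) monoid_scheme \<Rightarrow> 'a set \<Rightarrow> nat \<Rightarrow> ('a \<Rightarrow> complex mat) \<Rightarrow> bool" where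
  "is_irrep G H n \<rho> \<longleftrightarrow> is_rep G H n \<rho> \<and> n > 0 \<and>
     (\<forall>U. is_subspace n U \<and> (\<forall>h\<in>H. \<forall>u\<in>U. \<rho> h *\<^sub>v u \<in> U) \<longrightarrow>
          U = {0\<^sub>v n} \<or> U = carrier_vec n)"

definition character :: "'a set \<Rightarrow> ('a \<Rightarrow> complex mat) \<Rightarrow> 'a \<Rightarrow> complex" where
  "character H \<rho> = (\<lambda>h. if h \<in> H then mtrace (\<rho> h) else 0)"

text \<open>Irr(H): irreducible representations, identified with their characters
  (two representations are isomorphic iff they have the same character).\<close>
definition Irr :: "('a, 'b) monoid_scheme \<Rightarrow> 'a set \<Rightarrow> ('a \<Rightarrow> complex) set" where
  "Irr G H = {character H \<rho> | n \<rho>. is_irrep G H n \<rho>}"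

definition char_inner :: "'a set \<Rightarrow> ('a \<Rightarrow> complex) \<Rightarrow> ('a \<Rightarrow> complex) \<Rightarrow> complex" where
  "char_inner K \<alpha> \<beta> = (\<Sum>g\<in>K. \<alpha> g * cnj (\<beta> g)) / of_nat (card K)"

definition ind_char :: "('a, 'b) monoid_scheme \<Rightarrow> 'a set \<Rightarrow> 'a set \<Rightarrow> ('a \<Rightarrow> complex) \<Rightarrow> 'a \<Rightarrow> complex" where
  "ind_char G H K \<psi> = (\<lambda>g. if g \<in> K then
      (\<Sum>x\<in>K. (if x \<otimes>\<^bsub>G\<^esub> g \<otimes>\<^bsub>G\<^esub> inv\<^bsub>G\<^esub> x \<in> H then \<psi> (x \<otimes>\<^bsub>G\<^esub> g \<otimes>\<^bsub>G\<^esub> inv\<^bsub>G\<^esub> x) else 0))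
        / of_nat (card H) else 0)"

definition constituent :: "('a, 'b) monoid_scheme \<Rightarrow> 'a set \<Rightarrow> 'a set \<Rightarrow> ('a \<Rightarrow> complex) \<Rightarrow> ('a \<Rightarrow> complex) \<Rightarrow> bool" where
  "constituent G H K M E \<longleftrightarrow> char_inner K (ind_char G H K M) E \<noteq> 0"

definition sgn_twist :: "('a, 'b) monoid_scheme \<Rightarrow> 'a set \<Rightarrow> ('a \<Rightarrow> complex) \<Rightarrow> 'a \<Rightarrow> complex" where
  "sgn_twist G J E = (\<lambda>w. (-1) ^ clen G J w * E w)"

definition zmul :: "int \<Rightarrow> 'g::ab_group_add \<Rightarrow> 'g" where
  "zmul k x = (if 0 \<le> k then (\<Sum>i<nat k. x) else - (\<Sum>i<nat (- k). x))"

definition reflections :: "('a, 'b) monoid_scheme \<Rightarrow> 'a set \<Rightarrow> 'a set" where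
  "reflections G J = {w \<otimes>\<^bsub>G\<^esub> s \<otimes>\<^bsub>G\<^esub> inv\<^bsub>G\<^esub> w | w s. w \<in> parab G J \<and> s \<in> J}"

definition conj_class :: "('a, 'b) monoid_scheme \<Rightarrow> 'a set \<Rightarrow> 'a \<Rightarrow> 'a set" where
  "conj_class G H t = {x \<otimes>\<^bsub>G\<^esub> t \<otimes>\<^bsub>G\<^esub> inv\<^bsub>G\<^esub> x | x. x \<in> H}"

definition refl_classes :: "('a, 'b) monoid_scheme \<Rightarrow> 'a set \<Rightarrow> 'a set set" where
  "refl_classes G J = {conj_class G (parab G J) t | t. t \<in> reflections G J}"

definition class_rep :: "'a set \<Rightarrow> 'a set \<Rightarrow> 'a" where
  "class_rep J C = (SOME s. s \<in> J \<and> s \<in> C)"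

definition omegaL :: "('a, 'b) monoid_scheme \<Rightarrow> ('a \<Rightarrow> 'g::ab_group_add) \<Rightarrow> 'a set \<Rightarrow> ('a \<Rightarrow> complex) \<Rightarrow> 'g" where
  "omegaL G L J E = (\<Sum>C\<in>refl_classes G J.
     zmul (THE k::int. of_int k = of_nat (card C) * E (class_rep J C) / E \<one>\<^bsub>G\<^esub>)
          (L (class_rep J C)))"

text \<open>\<open>atilde_aux G L n J E\<close> computes \<open>\<tilde>a_E\<close> for \<open>E \<in> Irr(W_J)\<close> whenever \<open>card J \<le> n\<close>
  (the recursion is over parabolic subgroups \<open>W_K\<close>, \<open>K \<subset> J\<close>).\<close>
primrec atilde_aux :: "('a, 'b) monoid_scheme \<Rightarrow> ('a \<Rightarrow> 'g::linordered_ab_group_add) \<Rightarrow> nat \<Rightarrow>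
    'a set \<Rightarrow> ('a \<Rightarrow> complex) \<Rightarrow> 'g" where
  "atilde_aux G L 0 J E = 0"
| "atilde_aux G L (Suc n) J E =
     (if J = {} then 0 else
      (let a' = (\<lambda>F. Max {atilde_aux G L n K M | K M.
                    K \<subset> J \<and> M \<in> Irr G (parab G K) \<and> constituent G (parab G K) (parab G J) M F})
       in if a' (sgn_twist G J E) - a' E \<le> omegaL G L J E then a' E
          else a' (sgn_twist G J E) - omegaL G L J E))"

definition atilde :: "('a, 'b) monoid_scheme \<Rightarrow> ('a \<Rightarrow> 'g::linordered_ab_group_add) \<Rightarrow>
    'a set \<Rightarrow> ('a \<Rightarrow> complex) \<Rightarrow> 'g" where
  "atilde G L J E = atilde_aux G L (card J) J E"

definition atilde' :: "('a, 'b) monoid_scheme \<Rightarrow> ('a \<Rightarrow> 'g::linordered_ab_group_add) \<Rightarrow>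
    'a set \<Rightarrow> ('a \<Rightarrow> complex) \<Rightarrow> 'g" where
  "atilde' G L J E = Max {atilde G L K M | K M.
      K \<subset> J \<and> M \<in> Irr G (parab G K) \<and> constituent G (parab G K) (parab G J) M E}"

end

theory Submission
  imports Defs "Jordan_Normal_Form.Char_Poly" "Jordan_Normal_Form.Schur_Decomposition"
    "Jordan_Normal_Form.Determinant"
begin

lemma mtrace_comm:
  assumes "X \<in> carrier_mat n n" "Y \<in> carrier_mat n n"
  shows "mtrace (X * Y) = mtrace (Y * X)"
proof -
  have "mtrace (X * Y) = (\<Sum>i<n. \<Sum>j<n. X $$ (i,j) * Y $$ (j,i))"
    using assms unfolding mtrace_def by (auto simp: scalar_prod_def atLeast0LessThan)
  also have "\<dots> = (\<Sum>j<n. \<Sum>i<n. Y $$ (j,i) * X $$ (i,j))"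
    by (subst sum.swap) (simp add: mult.commute)
  also have "\<dots> = mtrace (Y * X)"
    using assms unfolding mtrace_def by (auto simp: scalar_prod_def atLeast0LessThan)
  finally show ?thesis .
qed

lemma eigen_pow:
  fixes A :: "'a::field mat"
  assumes A: "A \<in> carrier_mat n n" and v: "v \<in> carrier_vec n" and ev: "A *\<^sub>v v = e \<cdot>\<^sub>v v"
  shows "(A ^\<^sub>m k) *\<^sub>v v = (e ^ k) \<cdot>\<^sub>v v"
proof (induction k)
  case 0 then show ?case using v A by simp
next
  case (Suc k)
  have "(A ^\<^sub>m Suc k) *\<^sub>v v = (A ^\<^sub>m k) *\<^sub>v (A *\<^sub>v v)"
    using A v by (simp add: assoc_mult_mat_vec[of _ n n _ n])
  also have "\<dots> = e \<cdot>\<^sub>v ((A ^\<^sub>m k) *\<^sub>v v)" using A v ev by (simp add: mult_mat_vec[OF pow_carrier_mat[OF A] v])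
  also have "\<dots> = (e ^ Suc k) \<cdot>\<^sub>v v" using Suc by (simp add: smult_smult_assoc mult.commute)
  finally show ?case .
qed

lemma trace_roots:
  fixes A :: "complex mat"
  assumes A: "A \<in> carrier_mat n n" and m: "m > 0" and Am: "A ^\<^sub>m m = 1\<^sub>m n"
  shows "\<exists>es. length es = n \<and> (\<forall>e\<in>set es. e ^ m = 1) \<and> mtrace A = sum_list es"
proof -
  obtain es where cp: "char_poly A = (\<Prod>a\<leftarrow>es. [:- a, 1:])" and len: "length es = n"
    using char_poly_factorized[OF A] by auto
  obtain B P Q where sd: "schur_decomposition A es = (B,P,Q)" by (cases "schur_decomposition A es") auto
  from schur_decomposition[OF A cp sd] have sim: "similar_mat_wit A B P Q" and dB: "diag_mat B = es" by auto
  from sim A have BPQ: "B \<in> carrier_mat n n" "P \<in> carrier_mat n n" "Q \<in> carrier_mat n n"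
    "Q * P = 1\<^sub>m n" "A = P * B * Q"
    unfolding similar_mat_wit_def Let_def by auto
  have "mtrace A = mtrace ((P * B) * Q)" using BPQ by simp
  also have "\<dots> = mtrace (Q * (P * B))" using BPQ by (intro mtrace_comm[of _ n]) auto
  also have "Q * (P * B) = B" using BPQ by (simp add: assoc_mult_mat[symmetric, of Q n n P n B n])
  also have "mtrace B = sum_list es" unfolding dB[symmetric] diag_mat_def mtrace_def
    by (simp add: interv_sum_list_conv_sum_set_nat atLeast0LessThan)
  finally have tr: "mtrace A = sum_list es" .
  have "e ^ m = 1" if e: "e \<in> set es" for e
  proof -
    have "poly (char_poly A) e = 0" unfolding cp using e by (rule linear_poly_root)
    then have "eigenvalue A e" using eigenvalue_root_char_poly[OF A] by simp
    then obtain v where v: "v \<in> carrier_vec n" "v \<noteq> 0\<^sub>v n" "A *\<^sub>v v = e \<cdot>\<^sub>v v"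
      unfolding eigenvalue_def eigenvector_def using A by auto
    have "v = (e ^ m) \<cdot>\<^sub>v v" using eigen_pow[OF A v(1) v(3), of m] Am v(1) by simp
    moreover obtain i where i: "i < n" "v $ i \<noteq> 0" using v(1,2) by (metis eq_vecI carrier_vecD index_zero_vec)
    ultimately have "v $ i = (e ^ m) * v $ i" using v(1) by (metis carrier_vecD index_smult_vec(1))
    then show ?thesis using i by simp
  qed
  then show ?thesis using len tr by blast
qed

lemma Irr_E:
  assumes "E \<in> Irr G H"
  obtains n \<rho> where "is_irrep G H n \<rho>" "E = character H \<rho>"
  using assms unfolding Irr_def by auto

lemma irrep_dim_le:
  assumes H1: "\<one>\<^bsub>G\<^esub> \<in> H" and Hm: "\<And>g h. g \<in> H \<Longrightarrow> h \<in> H \<Longrightarrow> g \<otimes>\<^bsub>G\<^esub> h \<in> H"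
    and fH: "finite H" and irr: "is_irrep G H n \<rho>"
  shows "n \<le> card H"
proof (rule ccontr)
  assume "\<not> n \<le> card H"
  then have kn: "card H < n" by simp
  obtain hs where hs: "set hs = H" "distinct hs" using finite_distinct_list[OF fH] by auto
  define k where "k = length hs"
  have k: "k = card H" unfolding k_def using hs distinct_card by metis
  have rho: "\<And>h. h \<in> H \<Longrightarrow> \<rho> h \<in> carrier_mat n n" "\<rho> \<one>\<^bsub>G\<^esub> = 1\<^sub>m n"
    "\<And>g h. g \<in> H \<Longrightarrow> h \<in> H \<Longrightarrow> \<rho> (g \<otimes>\<^bsub>G\<^esub> h) = \<rho> g * \<rho> h" and n0: "n > 0"
    using irr unfolding is_irrep_def is_rep_def by auto
  define c where "c = (\<lambda>i. if i < k then vec n (\<lambda>j. \<rho> (hs ! i) $$ (j,0)) else 0\<^sub>v n)"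
  define B where "B = mat\<^sub>r n n (\<lambda>i. if i = k then 0\<^sub>v n else c i)"
  have B: "B \<in> carrier_mat n n" unfolding B_def by auto
  have "det B = 0" unfolding B_def using kn k by (intro det_row_0) (auto simp: c_def)
  then obtain u where u: "u \<in> carrier_vec n" "u \<noteq> 0\<^sub>v n" "B *\<^sub>v u = 0\<^sub>v n"
    using det_0_iff_vec_prod_zero[OF B] by auto
  have orth: "(\<rho> g *\<^sub>v unit_vec n 0) \<bullet> u = 0" if g: "g \<in> H" for g
  proof -
    obtain i where i: "i < k" "hs ! i = g" using g hs unfolding k_def by (metis in_set_conv_nth)
    have "(B *\<^sub>v u) $ i = 0" using u(3) i kn k by simp
    moreover have "(B *\<^sub>v u) $ i = c i \<bullet> u" using i kn k unfolding B_def
      by (subst index_mult_mat_vec) (auto simp: row_mat_of_row_fun c_def)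
    moreover have "c i = \<rho> g *\<^sub>v unit_vec n 0" using i rho(1)[OF g] n0 unfolding c_def
      by (intro eq_vecI) auto
    ultimately show ?thesis by simp
  qed
  define U where "U = {v \<in> carrier_vec n. \<forall>g\<in>H. (\<rho> g *\<^sub>v v) \<bullet> u = 0}"
  have sub: "is_subspace n U" unfolding is_subspace_def U_def
  proof (intro conjI ballI allI subsetI)
    show "0\<^sub>v n \<in> {v \<in> carrier_vec n. \<forall>g\<in>H. (\<rho> g *\<^sub>v v) \<bullet> u = 0}"
    proof (intro CollectI conjI ballI)
      fix g assume g: "g \<in> H"
      have "\<rho> g *\<^sub>v 0\<^sub>v n = 0\<^sub>v n" using rho(1)[OF g] by (intro eq_vecI) auto
      then show "(\<rho> g *\<^sub>v 0\<^sub>v n) \<bullet> u = 0" using u(1) by simp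
    qed auto
  next
    fix v w assume v: "v \<in> {v \<in> carrier_vec n. \<forall>g\<in>H. (\<rho> g *\<^sub>v v) \<bullet> u = 0}"
      and w: "w \<in> {v \<in> carrier_vec n. \<forall>g\<in>H. (\<rho> g *\<^sub>v v) \<bullet> u = 0}"
    show "v + w \<in> {v \<in> carrier_vec n. \<forall>g\<in>H. (\<rho> g *\<^sub>v v) \<bullet> u = 0}"
    proof (intro CollectI conjI ballI)
      fix g assume g: "g \<in> H"
      have "(\<rho> g *\<^sub>v (v + w)) \<bullet> u = (\<rho> g *\<^sub>v v + \<rho> g *\<^sub>v w) \<bullet> u"
        using v w rho(1)[OF g] by (simp add: mult_add_distrib_mat_vec[of _ n n])
      also have "\<dots> = (\<rho> g *\<^sub>v v) \<bullet> u + (\<rho> g *\<^sub>v w) \<bullet> u"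
        using v w rho(1)[OF g] u(1) by (intro add_scalar_prod_distrib[of _ n]) auto
      finally show "(\<rho> g *\<^sub>v (v + w)) \<bullet> u = 0" using v w g by simp
    qed (use v w in auto)
  next
    fix a :: complex and v assume v: "v \<in> {v \<in> carrier_vec n. \<forall>g\<in>H. (\<rho> g *\<^sub>v v) \<bullet> u = 0}"
    show "a \<cdot>\<^sub>v v \<in> {v \<in> carrier_vec n. \<forall>g\<in>H. (\<rho> g *\<^sub>v v) \<bullet> u = 0}"
    proof (intro CollectI conjI ballI)
      fix g assume g: "g \<in> H"
      have "(\<rho> g *\<^sub>v (a \<cdot>\<^sub>v v)) \<bullet> u = (a \<cdot>\<^sub>v (\<rho> g *\<^sub>v v)) \<bullet> u"
        using v rho(1)[OF g] by (simp add: mult_mat_vec[of _ n n])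
      also have "\<dots> = a * ((\<rho> g *\<^sub>v v) \<bullet> u)"
        using v rho(1)[OF g] u(1) by (intro smult_scalar_prod_distrib[of _ n]) auto
      finally show "(\<rho> g *\<^sub>v (a \<cdot>\<^sub>v v)) \<bullet> u = 0" using v g by simp
    qed (use v in auto)
  qed auto
  have inv: "\<forall>h\<in>H. \<forall>v\<in>U. \<rho> h *\<^sub>v v \<in> U"
  proof (intro ballI)
    fix h v assume h: "h \<in> H" and v: "v \<in> U"
    have "(\<rho> g *\<^sub>v (\<rho> h *\<^sub>v v)) \<bullet> u = 0" if g: "g \<in> H" for g
    proof -
      have "\<rho> g *\<^sub>v (\<rho> h *\<^sub>v v) = \<rho> (g \<otimes>\<^bsub>G\<^esub> h) *\<^sub>v v"
        using rho(1)[OF g] rho(1)[OF h] rho(3)[OF g h] v unfolding U_def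
        by (auto simp: assoc_mult_mat_vec[of _ n n _ n])
      then show ?thesis using v Hm[OF g h] unfolding U_def by auto
    qed
    then show "\<rho> h *\<^sub>v v \<in> U" using v rho(1)[OF h] unfolding U_def by auto
  qed
  have "unit_vec n 0 \<in> U" unfolding U_def using orth by auto
  moreover have "unit_vec n 0 \<noteq> 0\<^sub>v n" using n0 by simp
  ultimately have "U = carrier_vec n"
    using irr sub inv unfolding is_irrep_def by blast
  have "u $ j = 0" if j: "j < n" for j
  proof -
    have "unit_vec n j \<in> U" using \<open>U = carrier_vec n\<close> by simp
    then have "(\<rho> \<one>\<^bsub>G\<^esub> *\<^sub>v unit_vec n j) \<bullet> u = 0" unfolding U_def using H1 by auto
    then show ?thesis using rho(2) u(1) j by simp
  qed
  then have "u = 0\<^sub>v n" using u(1) by (intro eq_vecI) auto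
  with u(2) show False by simp
qed

lemma rep_pow:
  assumes H1: "\<one>\<^bsub>G\<^esub> \<in> H" and Hm: "\<And>g h. g \<in> H \<Longrightarrow> h \<in> H \<Longrightarrow> g \<otimes>\<^bsub>G\<^esub> h \<in> H"
    and rep: "is_rep G H n \<rho>" and h: "h \<in> H"
  shows "h [^]\<^bsub>G\<^esub> (k::nat) \<in> H \<and> \<rho> (h [^]\<^bsub>G\<^esub> k) = \<rho> h ^\<^sub>m k"
proof (induction k)
  case 0 then show ?case using H1 rep h unfolding is_rep_def by auto
next
  case (Suc k)
  then show ?case using Hm[OF _ h] rep h unfolding is_rep_def by simp
qed

lemma Irr_finite:
  assumes grp: "group G" and fin: "finite (carrier G)" and HG: "H \<subseteq> carrier G"
    and H1: "\<one>\<^bsub>G\<^esub> \<in> H" and Hm: "\<And>g h. g \<in> H \<Longrightarrow> h \<in> H \<Longrightarrow> g \<otimes>\<^bsub>G\<^esub> h \<in> H"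
  shows "finite (Irr G H)"
proof -
  define N where "N = card (carrier G)"
  define R where "R = (\<Union>k\<in>{1..N}. {z::complex. z ^ k = 1})"
  have fR: "finite R" unfolding R_def by (auto intro: finite_roots_unity)
  define V where "V = sum_list ` {xs. set xs \<subseteq> R \<and> length xs \<le> N}"
  have fV: "finite V" unfolding V_def using finite_lists_length_le[OF fR] by blast
  have fH: "finite H" using HG fin by (rule finite_subset)
  have "Irr G H \<subseteq> {f. \<forall>x. (x \<in> H \<longrightarrow> f x \<in> V) \<and> (x \<notin> H \<longrightarrow> f x = 0)}"
  proof
    fix E assume "E \<in> Irr G H"
    then obtain n \<rho> where irr: "is_irrep G H n \<rho>" and Ed: "E = character H \<rho>" by (rule Irr_E)
    have nle: "n \<le> N" using irrep_dim_le[OF H1 Hm fH irr] card_mono[OF fin HG] unfolding N_def by simp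
    have rep: "is_rep G H n \<rho>" using irr unfolding is_irrep_def by simp
    have "mtrace (\<rho> h) \<in> V" if h: "h \<in> H" for h
    proof -
      have hc: "h \<in> carrier G" using h HG by auto
      define m where "m = group.ord G h"
      have m1: "m \<ge> 1" "m \<le> N" unfolding m_def N_def
        using group.ord_ge_1[OF grp fin hc] group.ord_le_group_order[OF grp fin hc] by (auto simp: Coset.order_def)
      have "\<rho> h ^\<^sub>m m = 1\<^sub>m n"
        using rep_pow[OF H1 Hm rep h, of m] group.pow_ord_eq_1[OF grp hc] rep
        unfolding m_def is_rep_def by simp
      then obtain es where es: "length es = n" "\<forall>e\<in>set es. e ^ m = 1" "mtrace (\<rho> h) = sum_list es"
        using trace_roots[of "\<rho> h" n m] rep h m1 unfolding is_rep_def by auto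
      have "set es \<subseteq> R" unfolding R_def using es(2) m1 by auto
      then show ?thesis unfolding V_def using es nle by auto
    qed
    then show "E \<in> {f. \<forall>x. (x \<in> H \<longrightarrow> f x \<in> V) \<and> (x \<notin> H \<longrightarrow> f x = 0)}"
      unfolding Ed character_def by auto
  qed
  moreover have "finite {f. \<forall>x. (x \<in> H \<longrightarrow> f x \<in> V) \<and> (x \<notin> H \<longrightarrow> f x = (0::complex))}"
    by (rule finite_set_of_finite_funs[OF fH fV])
  ultimately show ?thesis by (rule finite_subset)
qed


definition msum :: "'a set \<Rightarrow> ('a \<Rightarrow> complex mat) \<Rightarrow> nat \<Rightarrow> complex mat" where
  "msum C f n = mat n n (\<lambda>(i,j). \<Sum>t\<in>C. f t $$ (i,j))"

lemma msum_carrier[simp]: "msum C f n \<in> carrier_mat n n" unfolding msum_def by simp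

lemma mult_entry:
  assumes "A \<in> carrier_mat n n" "B \<in> carrier_mat n n" "i < n" "j < n"
  shows "(A * B) $$ (i,j) = (\<Sum>k<n. A $$ (i,k) * B $$ (k,j))"
  using assms by (simp add: scalar_prod_def atLeast0LessThan)

lemma mult_msum_left:
  assumes X: "X \<in> carrier_mat n n" and f: "\<And>t. t \<in> C \<Longrightarrow> f t \<in> carrier_mat n n"
  shows "X * msum C f n = msum C (\<lambda>t. X * f t) n"
proof (rule eq_matI)
  fix i j assume ij: "i < dim_row (msum C (\<lambda>t. X * f t) n)" "j < dim_col (msum C (\<lambda>t. X * f t) n)"
  then have ij': "i < n" "j < n" unfolding msum_def by auto
  have "(X * msum C f n) $$ (i,j) = (\<Sum>k<n. X $$ (i,k) * (\<Sum>t\<in>C. f t $$ (k,j)))"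
    using X ij' by (simp add: scalar_prod_def msum_def atLeast0LessThan)
  also have "\<dots> = (\<Sum>t\<in>C. \<Sum>k<n. X $$ (i,k) * f t $$ (k,j))"
    by (simp add: sum_distrib_left sum.swap[of _ C])
  also have "\<dots> = msum C (\<lambda>t. X * f t) n $$ (i,j)"
    using X f ij' by (auto simp: msum_def mult_entry intro!: sum.cong)
  finally show "(X * msum C f n) $$ (i,j) = msum C (\<lambda>t. X * f t) n $$ (i,j)" .
qed (use X in \<open>auto simp: msum_def\<close>)

lemma mult_msum_right:
  assumes X: "X \<in> carrier_mat n n" and f: "\<And>t. t \<in> C \<Longrightarrow> f t \<in> carrier_mat n n"
  shows "msum C f n * X = msum C (\<lambda>t. f t * X) n"
proof (rule eq_matI)
  fix i j assume ij: "i < dim_row (msum C (\<lambda>t. f t * X) n)" "j < dim_col (msum C (\<lambda>t. f t * X) n)"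
  then have ij': "i < n" "j < n" unfolding msum_def by auto
  have "(msum C f n * X) $$ (i,j) = (\<Sum>k<n. (\<Sum>t\<in>C. f t $$ (i,k)) * X $$ (k,j))"
    using X ij' by (simp add: scalar_prod_def msum_def atLeast0LessThan)
  also have "\<dots> = (\<Sum>t\<in>C. \<Sum>k<n. f t $$ (i,k) * X $$ (k,j))"
    by (simp add: sum_distrib_right sum.swap[of _ C])
  also have "\<dots> = msum C (\<lambda>t. f t * X) n $$ (i,j)"
    using X f ij' by (auto simp: msum_def mult_entry[OF f X ij'] intro!: sum.cong)
  finally show "(msum C f n * X) $$ (i,j) = msum C (\<lambda>t. f t * X) n $$ (i,j)" .
qed (use X in \<open>auto simp: msum_def\<close>)

lemma msum_reindex:
  assumes "bij_betw h C D"
  shows "msum D f n = msum C (f \<circ> h) n"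
  unfolding msum_def
proof (rule eq_matI)
  fix i j show "mat n n (\<lambda>(i, j). \<Sum>t\<in>D. f t $$ (i, j)) $$ (i, j) = mat n n (\<lambda>(i, j). \<Sum>t\<in>C. (f \<circ> h) t $$ (i, j)) $$ (i, j)"
    if "i < dim_row (mat n n (\<lambda>(i, j). \<Sum>t\<in>C. (f \<circ> h) t $$ (i, j)))" "j < dim_col (mat n n (\<lambda>(i, j). \<Sum>t\<in>C. (f \<circ> h) t $$ (i, j)))"
    using that sum.reindex_bij_betw[OF assms, of "\<lambda>t. f t $$ (i,j)"] by auto
qed auto

lemma mtrace_msum:
  assumes "\<And>t. t \<in> C \<Longrightarrow> f t \<in> carrier_mat n n"
  shows "mtrace (msum C f n) = (\<Sum>t\<in>C. mtrace (f t))"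
proof -
  have "mtrace (msum C f n) = (\<Sum>i<n. \<Sum>t\<in>C. f t $$ (i, i))" unfolding mtrace_def msum_def by simp
  also have "\<dots> = (\<Sum>t\<in>C. \<Sum>i<n. f t $$ (i, i))" by (rule sum.swap)
  also have "\<dots> = (\<Sum>t\<in>C. mtrace (f t))" unfolding mtrace_def using assms by (auto intro!: sum.cong)
  finally show ?thesis .
qed

lemma mat_unit_col: "(A :: complex mat) \<in> carrier_mat n m \<Longrightarrow> i < n \<Longrightarrow> j < m \<Longrightarrow> (A *\<^sub>v unit_vec m j) $ i = A $$ (i,j)"
  by simp

lemma schur_scalar:
  assumes irr: "is_irrep G H n \<rho>" and A: "A \<in> carrier_mat n n"
    and comm: "\<And>h. h \<in> H \<Longrightarrow> \<rho> h * A = A * \<rho> h"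
  shows "\<exists>c. A = c \<cdot>\<^sub>m 1\<^sub>m n"
proof -
  have n0: "n > 0" and rho: "\<And>h. h \<in> H \<Longrightarrow> \<rho> h \<in> carrier_mat n n" using irr unfolding is_irrep_def is_rep_def by auto
  obtain es where cp: "char_poly A = (\<Prod>a\<leftarrow>es. [:- a, 1:])" and len: "length es = n"
    using char_poly_factorized[OF A] by auto
  define e where "e = es ! 0"
  have "e \<in> set es" unfolding e_def using len n0 by auto
  then have "poly (char_poly A) e = 0" unfolding cp by (rule linear_poly_root)
  then have "eigenvalue A e" using eigenvalue_root_char_poly[OF A] by simp
  then obtain v where v: "v \<in> carrier_vec n" "v \<noteq> 0\<^sub>v n" "A *\<^sub>v v = e \<cdot>\<^sub>v v"
    unfolding eigenvalue_def eigenvector_def using A by auto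
  define U where "U = {v \<in> carrier_vec n. A *\<^sub>v v = e \<cdot>\<^sub>v v}"
  have sub: "is_subspace n U" unfolding is_subspace_def U_def
  proof (intro conjI ballI allI subsetI)
    show "0\<^sub>v n \<in> {v \<in> carrier_vec n. A *\<^sub>v v = e \<cdot>\<^sub>v v}" using A by (auto intro!: eq_vecI)
  next
    fix x y assume x: "x \<in> {v \<in> carrier_vec n. A *\<^sub>v v = e \<cdot>\<^sub>v v}" and y: "y \<in> {v \<in> carrier_vec n. A *\<^sub>v v = e \<cdot>\<^sub>v v}"
    then show "x + y \<in> {v \<in> carrier_vec n. A *\<^sub>v v = e \<cdot>\<^sub>v v}"
      using A by (auto simp: mult_add_distrib_mat_vec[OF A] smult_add_distrib_vec)
  next
    fix a :: complex and x assume x: "x \<in> {v \<in> carrier_vec n. A *\<^sub>v v = e \<cdot>\<^sub>v v}"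
    then show "a \<cdot>\<^sub>v x \<in> {v \<in> carrier_vec n. A *\<^sub>v v = e \<cdot>\<^sub>v v}"
      using A by (auto simp: mult_mat_vec[OF A] smult_smult_assoc mult.commute)
  qed auto
  have inv: "\<forall>h\<in>H. \<forall>x\<in>U. \<rho> h *\<^sub>v x \<in> U"
  proof (intro ballI)
    fix h x assume h: "h \<in> H" and x: "x \<in> U"
    have "A *\<^sub>v (\<rho> h *\<^sub>v x) = (A * \<rho> h) *\<^sub>v x" using A rho[OF h] x unfolding U_def
      by (simp add: assoc_mult_mat_vec[of _ n n _ n])
    also have "\<dots> = (\<rho> h * A) *\<^sub>v x" using comm[OF h] by simp
    also have "\<dots> = \<rho> h *\<^sub>v (A *\<^sub>v x)" using A rho[OF h] x unfolding U_def
      by (intro assoc_mult_mat_vec[of _ n n _ n]) auto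
    also have "\<dots> = e \<cdot>\<^sub>v (\<rho> h *\<^sub>v x)" using x rho[OF h] unfolding U_def by (simp add: mult_mat_vec[OF rho[OF h]])
    finally show "\<rho> h *\<^sub>v x \<in> U" using x rho[OF h] unfolding U_def by auto
  qed
  have "v \<in> U" using v unfolding U_def by auto
  then have "U = carrier_vec n" using irr sub inv v(2) unfolding is_irrep_def by blast
  have "A = e \<cdot>\<^sub>m 1\<^sub>m n"
  proof (rule eq_matI)
    fix i j assume ij: "i < dim_row (e \<cdot>\<^sub>m 1\<^sub>m n)" "j < dim_col (e \<cdot>\<^sub>m 1\<^sub>m n)"
    then have ij': "i < n" "j < n" by auto
    have "unit_vec n j \<in> U" using \<open>U = carrier_vec n\<close> by simp
    then have "A *\<^sub>v unit_vec n j = e \<cdot>\<^sub>v unit_vec n j" unfolding U_def by auto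
    then have "(A *\<^sub>v unit_vec n j) $ i = (e \<cdot>\<^sub>v unit_vec n j) $ i" by simp
    then show "A $$ (i,j) = (e \<cdot>\<^sub>m 1\<^sub>m n) $$ (i,j)" using ij' A by auto
  qed (use A in auto)
  then show ?thesis by blast
qed

lemma msum_cong: "(\<And>t. t \<in> C \<Longrightarrow> f t = f' t) \<Longrightarrow> msum C f n = msum C f' n"
  unfolding msum_def by (auto intro!: eq_matI sum.cong)

lemma sum_list_pm1_Ints: "(\<forall>e\<in>set es. e = 1 \<or> e = -1) \<Longrightarrow> sum_list es \<in> (\<int> :: complex set)"
  by (induction es) auto

lemma class_int:
  assumes grp: "group G" and fin: "finite (carrier G)" and irr: "is_irrep G (carrier G) n \<rho>"
    and t0: "t0 \<in> carrier G" and C: "C = conj_class G (carrier G) t0"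
    and s: "s \<in> C" and ss: "s \<otimes>\<^bsub>G\<^esub> s = \<one>\<^bsub>G\<^esub>"
  shows "of_nat (card C) * mtrace (\<rho> s) / of_nat n \<in> \<int>"
proof -
  interpret G: group G by (rule grp)
  have n0: "n > 0" and rho: "\<And>h. h \<in> carrier G \<Longrightarrow> \<rho> h \<in> carrier_mat n n" "\<rho> \<one>\<^bsub>G\<^esub> = 1\<^sub>m n"
    "\<And>g h. g \<in> carrier G \<Longrightarrow> h \<in> carrier G \<Longrightarrow> \<rho> (g \<otimes>\<^bsub>G\<^esub> h) = \<rho> g * \<rho> h"
    using irr unfolding is_irrep_def is_rep_def by auto
  have c1: "inv\<^bsub>G\<^esub> a \<otimes>\<^bsub>G\<^esub> (a \<otimes>\<^bsub>G\<^esub> y) = y" if "a \<in> carrier G" "y \<in> carrier G" for a y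
    using that by (simp add: G.m_assoc[symmetric])
  have c2: "a \<otimes>\<^bsub>G\<^esub> (inv\<^bsub>G\<^esub> a \<otimes>\<^bsub>G\<^esub> y) = y" if "a \<in> carrier G" "y \<in> carrier G" for a y
    using that by (simp add: G.m_assoc[symmetric])
  have Cc: "C \<subseteq> carrier G" unfolding C conj_class_def using t0 by auto
  have fC: "finite C" using Cc fin by (rule finite_subset)
  have sc: "s \<in> carrier G" using s Cc by auto
  have conj: "g \<otimes>\<^bsub>G\<^esub> t \<otimes>\<^bsub>G\<^esub> inv\<^bsub>G\<^esub> g \<in> C" if g: "g \<in> carrier G" and t: "t \<in> C" for g t
  proof -
    obtain x where x: "x \<in> carrier G" "t = x \<otimes>\<^bsub>G\<^esub> t0 \<otimes>\<^bsub>G\<^esub> inv\<^bsub>G\<^esub> x" using t unfolding C conj_class_def by auto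
    have "g \<otimes>\<^bsub>G\<^esub> t \<otimes>\<^bsub>G\<^esub> inv\<^bsub>G\<^esub> g = (g \<otimes>\<^bsub>G\<^esub> x) \<otimes>\<^bsub>G\<^esub> t0 \<otimes>\<^bsub>G\<^esub> inv\<^bsub>G\<^esub> (g \<otimes>\<^bsub>G\<^esub> x)"
      using x g t0 by (simp add: G.inv_mult_group G.m_assoc)
    moreover have "g \<otimes>\<^bsub>G\<^esub> x \<in> carrier G" using g x by simp
    ultimately show ?thesis unfolding C conj_class_def by blast
  qed
  have conj_s: "\<exists>y\<in>carrier G. t = y \<otimes>\<^bsub>G\<^esub> s \<otimes>\<^bsub>G\<^esub> inv\<^bsub>G\<^esub> y" if t: "t \<in> C" for t
  proof -
    obtain x where x: "x \<in> carrier G" "s = x \<otimes>\<^bsub>G\<^esub> t0 \<otimes>\<^bsub>G\<^esub> inv\<^bsub>G\<^esub> x" using s unfolding C conj_class_def by auto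
    obtain z where z: "z \<in> carrier G" "t = z \<otimes>\<^bsub>G\<^esub> t0 \<otimes>\<^bsub>G\<^esub> inv\<^bsub>G\<^esub> z" using t unfolding C conj_class_def by auto
    have "t = (z \<otimes>\<^bsub>G\<^esub> inv\<^bsub>G\<^esub> x) \<otimes>\<^bsub>G\<^esub> s \<otimes>\<^bsub>G\<^esub> inv\<^bsub>G\<^esub> (z \<otimes>\<^bsub>G\<^esub> inv\<^bsub>G\<^esub> x)"
      using x z t0 by (simp add: G.inv_mult_group G.m_assoc c1)
    then show ?thesis using x z by auto
  qed
  have bij_conj: "bij_betw (\<lambda>t. g \<otimes>\<^bsub>G\<^esub> t \<otimes>\<^bsub>G\<^esub> inv\<^bsub>G\<^esub> g) C C" if g: "g \<in> carrier G" for g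
  proof (rule bij_betw_byWitness[where f' = "\<lambda>t. inv\<^bsub>G\<^esub> g \<otimes>\<^bsub>G\<^esub> t \<otimes>\<^bsub>G\<^esub> g"])
    show "\<forall>a\<in>C. inv\<^bsub>G\<^esub> g \<otimes>\<^bsub>G\<^esub> (g \<otimes>\<^bsub>G\<^esub> a \<otimes>\<^bsub>G\<^esub> inv\<^bsub>G\<^esub> g) \<otimes>\<^bsub>G\<^esub> g = a"
      using g Cc by (auto simp: G.m_assoc c1 subsetD)
    show "\<forall>a'\<in>C. g \<otimes>\<^bsub>G\<^esub> (inv\<^bsub>G\<^esub> g \<otimes>\<^bsub>G\<^esub> a' \<otimes>\<^bsub>G\<^esub> g) \<otimes>\<^bsub>G\<^esub> inv\<^bsub>G\<^esub> g = a'"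
      using g Cc by (auto simp: G.m_assoc c2 subsetD)
    show "(\<lambda>t. g \<otimes>\<^bsub>G\<^esub> t \<otimes>\<^bsub>G\<^esub> inv\<^bsub>G\<^esub> g) ` C \<subseteq> C" using conj g by auto
    show "(\<lambda>t. inv\<^bsub>G\<^esub> g \<otimes>\<^bsub>G\<^esub> t \<otimes>\<^bsub>G\<^esub> g) ` C \<subseteq> C" using conj[of "inv\<^bsub>G\<^esub> g"] g by auto
  qed
  define A where "A = msum C \<rho> n"
  have Ar: "A * \<rho> g = msum C (\<lambda>t. \<rho> (t \<otimes>\<^bsub>G\<^esub> g)) n" if g: "g \<in> carrier G" for g
    unfolding A_def using rho g Cc by (subst mult_msum_right) (auto intro!: msum_cong)
  have comm: "\<rho> g * A = A * \<rho> g" if g: "g \<in> carrier G" for g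
  proof -
    have "\<rho> g * A = msum C (\<lambda>t. \<rho> (g \<otimes>\<^bsub>G\<^esub> t)) n"
      unfolding A_def using rho g Cc by (subst mult_msum_left) (auto intro!: msum_cong)
    also have "\<dots> = msum C ((\<lambda>t. \<rho> (t \<otimes>\<^bsub>G\<^esub> g)) \<circ> (\<lambda>t. g \<otimes>\<^bsub>G\<^esub> t \<otimes>\<^bsub>G\<^esub> inv\<^bsub>G\<^esub> g)) n"
      using g Cc by (intro msum_cong) (auto simp: G.m_assoc)
    also have "\<dots> = msum C (\<lambda>t. \<rho> (t \<otimes>\<^bsub>G\<^esub> g)) n"
      by (rule msum_reindex[symmetric, OF bij_conj[OF g]])
    finally show ?thesis using Ar[OF g] by simp
  qed
  obtain c where Ac: "A = c \<cdot>\<^sub>m 1\<^sub>m n"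
    using schur_scalar[OF irr _ comm] unfolding A_def by auto
  have "mtrace A = (\<Sum>t\<in>C. mtrace (\<rho> t))" unfolding A_def using rho Cc by (intro mtrace_msum) auto
  also have "\<dots> = (\<Sum>t\<in>C. mtrace (\<rho> s))"
  proof (rule sum.cong)
    fix t assume t: "t \<in> C"
    then obtain y where y: "y \<in> carrier G" "t = y \<otimes>\<^bsub>G\<^esub> s \<otimes>\<^bsub>G\<^esub> inv\<^bsub>G\<^esub> y" using conj_s by blast
    have "\<rho> t = (\<rho> y * \<rho> s) * \<rho> (inv\<^bsub>G\<^esub> y)" using y sc rho by simp
    then have "mtrace (\<rho> t) = mtrace ((\<rho> y * \<rho> s) * \<rho> (inv\<^bsub>G\<^esub> y))" by simp
    also have "\<dots> = mtrace (\<rho> (inv\<^bsub>G\<^esub> y) * (\<rho> y * \<rho> s))"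
      by (rule mtrace_comm[of _ n]) (use y sc rho in \<open>auto intro!: mult_carrier_mat\<close>)
    also have "\<rho> (inv\<^bsub>G\<^esub> y) * (\<rho> y * \<rho> s) = (\<rho> (inv\<^bsub>G\<^esub> y) * \<rho> y) * \<rho> s"
      using y sc rho by (simp add: assoc_mult_mat[of _ n n _ n _ n])
    also have "\<rho> (inv\<^bsub>G\<^esub> y) * \<rho> y = 1\<^sub>m n" using y rho(3)[of "inv\<^bsub>G\<^esub> y" y] rho(2) by simp
    also have "1\<^sub>m n * \<rho> s = \<rho> s" using rho(1)[OF sc] by simp
    finally show "mtrace (\<rho> t) = mtrace (\<rho> s)" .
  qed simp
  finally have trA: "mtrace A = of_nat (card C) * mtrace (\<rho> s)" by simp
  have "mtrace A = c * of_nat n" unfolding Ac mtrace_def by simp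
  then have cdef: "c = of_nat (card C) * mtrace (\<rho> s) / of_nat n" using trA n0 by (simp add: field_simps)
  \<comment> \<open>c is an algebraic integer\<close>
  obtain gs where gs: "set gs = carrier G" "distinct gs" using finite_distinct_list[OF fin] by auto
  define N where "N = length gs"
  define M :: "int mat" where "M = mat N N (\<lambda>(i,j). if gs ! j \<otimes>\<^bsub>G\<^esub> inv\<^bsub>G\<^esub> (gs ! i) \<in> C then 1 else 0)"
  define w where "w = vec N (\<lambda>i. \<rho> (gs ! i) $$ (0,0))"
  have MN: "M \<in> carrier_mat N N" unfolding M_def by simp
  have gsi: "gs ! i \<in> carrier G" if "i < N" for i
  proof -
    have "gs ! i \<in> set gs" using that unfolding N_def by (rule nth_mem)
    then show ?thesis using gs(1) by simp
  qed
  have bijn: "bij_betw ((!) gs) {..<N} (carrier G)" unfolding N_def by (rule bij_betw_nth) (use gs in auto)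
  have ev: "map_mat of_int M *\<^sub>v w = c \<cdot>\<^sub>v w"
  proof (rule eq_vecI)
    fix i assume "i < dim_vec (c \<cdot>\<^sub>v w)"
    then have i: "i < N" unfolding w_def by simp
    define g where "g = gs ! i"
    have g: "g \<in> carrier G" unfolding g_def using gsi[OF i] .
    have "(map_mat of_int M *\<^sub>v w) $ i = (\<Sum>j<N. (if gs ! j \<otimes>\<^bsub>G\<^esub> inv\<^bsub>G\<^esub> g \<in> C then \<rho> (gs ! j) $$ (0,0) else 0))"
    proof -
      have "(map_mat of_int M *\<^sub>v w) $ i = (\<Sum>j\<in>{0..<N}. of_int (M $$ (i,j)) * w $ j)"
        using i MN by (simp add: scalar_prod_def w_def)
      also have "\<dots> = (\<Sum>j<N. (if gs ! j \<otimes>\<^bsub>G\<^esub> inv\<^bsub>G\<^esub> g \<in> C then \<rho> (gs ! j) $$ (0,0) else 0))"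
        unfolding atLeast0LessThan by (rule sum.cong) (use i in \<open>auto simp: M_def w_def g_def\<close>)
      finally show ?thesis .
    qed
    also have "\<dots> = (\<Sum>x\<in>carrier G. (if x \<otimes>\<^bsub>G\<^esub> inv\<^bsub>G\<^esub> g \<in> C then \<rho> x $$ (0,0) else 0))"
      using sum.reindex_bij_betw[OF bijn, of "\<lambda>x. if x \<otimes>\<^bsub>G\<^esub> inv\<^bsub>G\<^esub> g \<in> C then \<rho> x $$ (0,0) else 0"] by simp
    also have "\<dots> = (\<Sum>x\<in>{x\<in>carrier G. x \<otimes>\<^bsub>G\<^esub> inv\<^bsub>G\<^esub> g \<in> C}. \<rho> x $$ (0,0))"
      using fin by (simp add: sum.inter_filter)
    also have "\<dots> = (\<Sum>t\<in>C. \<rho> (t \<otimes>\<^bsub>G\<^esub> g) $$ (0,0))"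
    proof (rule sum.reindex_bij_betw[symmetric, of "\<lambda>t. t \<otimes>\<^bsub>G\<^esub> g", unfolded o_def])
      show "bij_betw (\<lambda>t. t \<otimes>\<^bsub>G\<^esub> g) C {x \<in> carrier G. x \<otimes>\<^bsub>G\<^esub> inv\<^bsub>G\<^esub> g \<in> C}"
      proof (rule bij_betw_byWitness[where f' = "\<lambda>x. x \<otimes>\<^bsub>G\<^esub> inv\<^bsub>G\<^esub> g"])
        show "\<forall>a\<in>C. a \<otimes>\<^bsub>G\<^esub> g \<otimes>\<^bsub>G\<^esub> inv\<^bsub>G\<^esub> g = a" using g Cc by (auto simp: G.m_assoc subsetD)
        show "\<forall>a'\<in>{x \<in> carrier G. x \<otimes>\<^bsub>G\<^esub> inv\<^bsub>G\<^esub> g \<in> C}. a' \<otimes>\<^bsub>G\<^esub> inv\<^bsub>G\<^esub> g \<otimes>\<^bsub>G\<^esub> g = a'"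
          using g by (auto simp: G.m_assoc)
        show "(\<lambda>t. t \<otimes>\<^bsub>G\<^esub> g) ` C \<subseteq> {x \<in> carrier G. x \<otimes>\<^bsub>G\<^esub> inv\<^bsub>G\<^esub> g \<in> C}"
          using g Cc by (auto simp: G.m_assoc subsetD)
        show "(\<lambda>x. x \<otimes>\<^bsub>G\<^esub> inv\<^bsub>G\<^esub> g) ` {x \<in> carrier G. x \<otimes>\<^bsub>G\<^esub> inv\<^bsub>G\<^esub> g \<in> C} \<subseteq> C" by auto
      qed
    qed
    also have "\<dots> = msum C (\<lambda>t. \<rho> (t \<otimes>\<^bsub>G\<^esub> g)) n $$ (0,0)" unfolding msum_def using n0 by simp
    also have "\<dots> = (A * \<rho> g) $$ (0,0)" using Ar[OF g] by simp
    also have "\<dots> = c * \<rho> g $$ (0,0)" unfolding Ac using rho(1)[OF g] n0 by simp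
    also have "\<dots> = (c \<cdot>\<^sub>v w) $ i" unfolding w_def g_def using i by simp
    finally show "(map_mat of_int M *\<^sub>v w) $ i = (c \<cdot>\<^sub>v w) $ i" .
  qed (simp add: M_def w_def)
  have "\<one>\<^bsub>G\<^esub> \<in> set gs" using gs(1) by simp
  then obtain i1 where i1: "i1 < N" "gs ! i1 = \<one>\<^bsub>G\<^esub>" unfolding N_def in_set_conv_nth by blast
  have "w $ i1 = 1" unfolding w_def using i1 rho(2) n0 by simp
  then have w0: "w \<noteq> 0\<^sub>v N" using i1 by auto
  have MNc: "map_mat (of_int :: int \<Rightarrow> complex) M \<in> carrier_mat N N" using MN by simp
  have "eigenvalue (map_mat of_int M) c"
    unfolding eigenvalue_def eigenvector_def using ev w0 MNc by (intro conjI exI[of _ w]) (auto simp: w_def)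
  then have "poly (char_poly (map_mat of_int M)) c = 0" using eigenvalue_root_char_poly[OF MNc] by simp
  then have "poly (map_poly of_int (char_poly M)) c = 0" by (simp add: of_int_hom.char_poly_hom[OF MN])
  moreover have "lead_coeff (char_poly M) = 1" using degree_monic_char_poly[OF MN] by simp
  ultimately have "algebraic_int c" unfolding algebraic_int_altdef_ipoly by blast
  have "\<rho> s * \<rho> s = 1\<^sub>m n" using rho(3)[OF sc sc] ss rho(2) by metis
  then have "\<rho> s ^\<^sub>m 2 = 1\<^sub>m n" using rho(1)[OF sc] by (simp add: numeral_2_eq_2)
  then obtain es where es: "\<forall>e\<in>set es. e ^ 2 = 1" "mtrace (\<rho> s) = sum_list es"
    using trace_roots[OF rho(1)[OF sc], of 2] by auto
  have "mtrace (\<rho> s) \<in> \<int>" unfolding es(2) using es(1)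
    by (intro sum_list_pm1_Ints) (auto simp: power2_eq_1_iff)
  then have "mtrace (\<rho> s) \<in> \<rat>" using Ints_subset_Rats by blast
  then have "c \<in> \<rat>" unfolding cdef by (intro Rats_divide Rats_mult Rats_of_nat)
  with \<open>algebraic_int c\<close> have "c \<in> \<int>" by (rule rational_algebraic_int_is_int)
  then show ?thesis unfolding cdef .
qed


lemma zmul_neg: "zmul (- k) x = - zmul k x"
  unfolding zmul_def by auto

lemma set_cong_aux:
  assumes "\<And>K M. K \<subset> J \<Longrightarrow> f K M = g K M"
  shows "{f K M | K M. K \<subset> J \<and> Q K M} = {g K M | K M. K \<subset> J \<and> Q K M}"
  using assms by metis

lemma atilde_aux_indep:
  "finite K \<Longrightarrow> card K \<le> n \<Longrightarrow> card K \<le> m \<Longrightarrow> atilde_aux G L n K E = atilde_aux G L m K E"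
proof (induction n arbitrary: m K E)
  case 0
  then have "K = {}" by auto
  then show ?case by (cases m) auto
next
  case (Suc n)
  show ?case
  proof (cases "K = {}")
    case True
    then show ?thesis by (cases m) auto
  next
    case False
    with Suc.prems have "card K > 0" by auto
    with Suc.prems obtain m' where m: "m = Suc m'" by (cases m) auto
    have eq: "\<And>K' M. K' \<subset> K \<Longrightarrow> atilde_aux G L n K' M = atilde_aux G L m' K' M"
    proof -
      fix K' M assume "K' \<subset> K"
      then have "finite K'" "card K' < card K" using Suc.prems by (auto intro: finite_subset psubset_card_mono)
      then show "atilde_aux G L n K' M = atilde_aux G L m' K' M"
        using Suc.IH[of K' m' M] Suc.prems m by auto
    qed
    show ?thesis unfolding m atilde_aux.simps
      by (simp only: set_cong_aux[OF eq])
  qed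
qed

lemma atilde_unfold:
  assumes "finite J" "J \<noteq> {}"
  shows "atilde G L J E = (if atilde' G L J (sgn_twist G J E) - atilde' G L J E \<le> omegaL G L J E
      then atilde' G L J E else atilde' G L J (sgn_twist G J E) - omegaL G L J E)"
proof -
  obtain n where n: "card J = Suc n" using assms by (cases "card J") auto
  have eq: "\<And>K' M. K' \<subset> J \<Longrightarrow> atilde_aux G L n K' M = atilde G L K' M"
  proof -
    fix K' M assume "K' \<subset> J"
    then have "finite K'" "card K' < card J" using assms by (auto intro: finite_subset psubset_card_mono)
    then show "atilde_aux G L n K' M = atilde G L K' M"
      unfolding atilde_def using atilde_aux_indep[of K' n "card K'"] n by auto
  qed
  show ?thesis
    unfolding atilde_def n atilde_aux.simps using assms(2)
    by (simp only: set_cong_aux[OF eq] atilde_def[symmetric] atilde'_def[symmetric] n[symmetric] Let_def if_False)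
qed

lemma sgn_twist_twice: "sgn_twist G J (sgn_twist G J E) = E"
  unfolding sgn_twist_def by (auto simp: power2_eq_square[symmetric] power_mult[symmetric] mult.assoc[symmetric] simp flip: power_add mult_2)

lemma omega_sgn:
  assumes cox: "coxeter_system G S" and fin: "finite (carrier G)"
    and E: "E \<in> Irr G (carrier G)"
  shows "omegaL G L S (sgn_twist G S E) = - omegaL G L S E"
proof -
  have grp: "group G" and SG: "S \<subseteq> carrier G" and parS: "parab G S = carrier G"
    and invol: "\<forall>s\<in>S. s \<noteq> \<one>\<^bsub>G\<^esub> \<and> s \<otimes>\<^bsub>G\<^esub> s = \<one>\<^bsub>G\<^esub>"
    using cox unfolding coxeter_system_def by auto
  interpret G: group G by (rule grp)
  obtain n \<rho> where irr: "is_irrep G (carrier G) n \<rho>" and Ed: "E = character (carrier G) \<rho>"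
    using E by (rule Irr_E)
  have cl1: "clen G S \<one>\<^bsub>G\<^esub> = 0" unfolding clen_def
    by (rule Least_eq_0) (auto intro!: bexI[of _ "[]"] simp: wprod_def)
  have cls: "clen G S r = 1" if r: "r \<in> S" for r
    unfolding clen_def
  proof (rule Least_equality)
    show "\<exists>ws\<in>lists S. length ws = 1 \<and> wprod G ws = r"
      using r SG by (intro bexI[of _ "[r]"]) (auto simp: wprod_def)
  next
    fix y assume "\<exists>ws\<in>lists S. length ws = y \<and> wprod G ws = r"
    then show "1 \<le> y" using invol r by (cases y) (auto simp: wprod_def)
  qed
  have key: "zmul (THE k::int. of_int k = of_nat (card C) * sgn_twist G S E (class_rep S C) / sgn_twist G S E \<one>\<^bsub>G\<^esub>)
          (L (class_rep S C)) =
        - zmul (THE k::int. of_int k = of_nat (card C) * E (class_rep S C) / E \<one>\<^bsub>G\<^esub>) (L (class_rep S C))"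
    if C: "C \<in> refl_classes G S" for C
  proof -
    obtain t where t: "t \<in> reflections G S" and Cd: "C = conj_class G (carrier G) t"
      using C parS unfolding refl_classes_def by auto
    obtain w s0 where w: "w \<in> carrier G" "s0 \<in> S" "t = w \<otimes>\<^bsub>G\<^esub> s0 \<otimes>\<^bsub>G\<^esub> inv\<^bsub>G\<^esub> w"
      using t parS unfolding reflections_def by auto
    have s0c: "s0 \<in> carrier G" using w SG by auto
    have tc: "t \<in> carrier G" using w s0c by simp
    have "s0 = inv\<^bsub>G\<^esub> w \<otimes>\<^bsub>G\<^esub> t \<otimes>\<^bsub>G\<^esub> inv\<^bsub>G\<^esub> (inv\<^bsub>G\<^esub> w)"
      using w s0c by (simp add: G.m_assoc[symmetric]) (simp add: G.m_assoc)
    then have "s0 \<in> C" unfolding Cd conj_class_def using w by blast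
    then have "\<exists>s. s \<in> S \<and> s \<in> C" using w by blast
    then have r: "class_rep S C \<in> S" "class_rep S C \<in> C"
      unfolding class_rep_def by (metis (mono_tags, lifting) someI_ex)+
    define r0 where "r0 = class_rep S C"
    have r0c: "r0 \<in> carrier G" using r SG unfolding r0_def by auto
    have rr: "r0 \<otimes>\<^bsub>G\<^esub> r0 = \<one>\<^bsub>G\<^esub>" using invol r unfolding r0_def by auto
    have "of_nat (card C) * mtrace (\<rho> r0) / of_nat n \<in> \<int>"
      by (rule class_int[OF grp fin irr tc Cd]) (use r rr in \<open>auto simp: r0_def\<close>)
    moreover have E1: "E \<one>\<^bsub>G\<^esub> = of_nat n" using irr unfolding Ed character_def is_irrep_def is_rep_def by (simp add: mtrace_def)
    moreover have Er: "E r0 = mtrace (\<rho> r0)" using r0c unfolding Ed character_def by simp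
    ultimately obtain k0 where k0: "of_nat (card C) * E r0 / E \<one>\<^bsub>G\<^esub> = of_int k0"
      by (auto elim: Ints_cases)
    have sg: "sgn_twist G S E r0 = - E r0" "sgn_twist G S E \<one>\<^bsub>G\<^esub> = E \<one>\<^bsub>G\<^esub>"
      unfolding sgn_twist_def using cls r cl1 unfolding r0_def by auto
    have th1: "(THE k::int. of_int k = of_nat (card C) * E r0 / E \<one>\<^bsub>G\<^esub>) = k0"
      using k0 by (intro the_equality) auto
    have "of_nat (card C) * sgn_twist G S E r0 / sgn_twist G S E \<one>\<^bsub>G\<^esub> = of_int (- k0)"
      using k0 unfolding sg by (simp add: minus_divide_left)
    then have th2: "(THE k::int. of_int k = of_nat (card C) * sgn_twist G S E r0 / sgn_twist G S E \<one>\<^bsub>G\<^esub>) = - k0"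
      by (intro the_equality) (simp, metis of_int_eq_iff of_int_minus)
    show ?thesis using th1 th2 unfolding r0_def by (simp add: zmul_neg)
  qed
  show ?thesis unfolding omegaL_def sum_negf[symmetric] by (rule sum.cong) (auto simp: key)
qed

lemma Max_set_finite:
  assumes cox: "coxeter_system G S" and fin: "finite (carrier G)" and J: "J \<subseteq> S"
  shows "finite {atilde G L K M | K M.
      K \<subset> J \<and> M \<in> Irr G (parab G K) \<and> constituent G (parab G K) (parab G J) M E}"
proof -
  have grp: "group G" and SG: "S \<subseteq> carrier G" using cox unfolding coxeter_system_def by auto
  have fJ: "finite J" using J SG fin by (meson finite_subset)
  have fI: "finite (Irr G (parab G K))" if K: "K \<subseteq> J" for K
  proof -
    have sub: "subgroup (parab G K) G" using K J SG by (intro group.generate_is_subgroup[OF grp]) auto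
    show ?thesis
      by (rule Irr_finite[OF grp fin]) (use sub in \<open>auto simp: subgroup.subset subgroup.one_closed subgroup.m_closed\<close>)
  qed
  have "{atilde G L K M | K M.
      K \<subset> J \<and> M \<in> Irr G (parab G K) \<and> constituent G (parab G K) (parab G J) M E}
      \<subseteq> (\<lambda>(K,M). atilde G L K M) ` (SIGMA K:Pow J. Irr G (parab G K))" by auto
  moreover have "finite (SIGMA K:Pow J. Irr G (parab G K))" using fJ fI by (intro finite_SigmaI) auto
  ultimately show ?thesis by (meson finite_imageI finite_subset)
qed

lemma mtrace_one[simp]: "mtrace (1\<^sub>m n) = of_nat n"
  unfolding mtrace_def by simp

lemma irrep_triv: "is_irrep G {\<one>\<^bsub>G\<^esub>} 1 (\<lambda>_. 1\<^sub>m 1)"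
  unfolding is_irrep_def is_rep_def
proof (intro conjI allI impI ballI)
  fix U assume U: "is_subspace 1 U \<and> (\<forall>h\<in>{\<one>\<^bsub>G\<^esub>}. \<forall>u\<in>U. 1\<^sub>m 1 *\<^sub>v u \<in> U)"
  show "U = {0\<^sub>v 1} \<or> U = carrier_vec 1"
  proof (cases "U \<subseteq> {0\<^sub>v 1}")
    case True
    then show ?thesis using U unfolding is_subspace_def by auto
  next
    case False
    then obtain u where u: "u \<in> U" "u \<noteq> 0\<^sub>v 1" by auto
    have uc: "u \<in> carrier_vec 1" using U u unfolding is_subspace_def by auto
    have u0: "u $ 0 \<noteq> 0"
    proof
      assume "u $ 0 = 0"
      then have "u = 0\<^sub>v 1" using uc by (intro eq_vecI) auto
      with u show False by simp
    qed
    have "carrier_vec 1 \<subseteq> U"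
    proof
      fix v :: "complex vec" assume v: "v \<in> carrier_vec 1"
      have "v = (v $ 0 / u $ 0) \<cdot>\<^sub>v u" using v uc u0 by (intro eq_vecI) auto
      moreover have "(v $ 0 / u $ 0) \<cdot>\<^sub>v u \<in> U" using U u unfolding is_subspace_def by auto
      ultimately show "v \<in> U" by simp
    qed
    then show ?thesis using U unfolding is_subspace_def by auto
  qed
qed auto

lemma triv_in_set:
  assumes cox: "coxeter_system G S" and fin: "finite (carrier G)" and S: "S \<noteq> {}"
    and E: "E \<in> Irr G (carrier G)"
  shows "(0::'g::linordered_ab_group_add) \<in> {atilde G L K M | K M.
      K \<subset> S \<and> M \<in> Irr G (parab G K) \<and> constituent G (parab G K) (parab G S) M E}"
proof -
  have grp: "group G" and parS: "parab G S = carrier G" using cox unfolding coxeter_system_def by auto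
  have p0: "parab G {} = {\<one>\<^bsub>G\<^esub>}" using group.generate_empty[OF grp] .
  define M where "M = character {\<one>\<^bsub>G\<^esub>} (\<lambda>_. 1\<^sub>m 1)"
  have MI: "M \<in> Irr G (parab G {})" unfolding p0 M_def Irr_def using irrep_triv by blast
  obtain n \<rho> where irr: "is_irrep G (carrier G) n \<rho>" and Ed: "E = character (carrier G) \<rho>"
    using E by (rule Irr_E)
  have E1: "E \<one>\<^bsub>G\<^esub> = of_nat n" "n > 0"
    using irr grp unfolding Ed character_def is_irrep_def is_rep_def by (auto simp: group.is_monoid monoid.one_closed)
  have ind: "ind_char G {\<one>\<^bsub>G\<^esub>} (carrier G) M g = (if g = \<one>\<^bsub>G\<^esub> then of_nat (card (carrier G)) else 0)"
    if g: "g \<in> carrier G" for g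
  proof -
    have "\<And>x. x \<in> carrier G \<Longrightarrow> (x \<otimes>\<^bsub>G\<^esub> g \<otimes>\<^bsub>G\<^esub> inv\<^bsub>G\<^esub> x = \<one>\<^bsub>G\<^esub>) = (g = \<one>\<^bsub>G\<^esub>)"
      using g grp
      by (metis group.inv_closed group.inv_solve_right group.is_monoid group.r_inv monoid.m_closed monoid.r_one monoid.l_one group.l_cancel_one)
    then show ?thesis using g unfolding ind_char_def M_def character_def
      by (auto simp: mtrace_def)
  qed
  have ci: "char_inner (carrier G) (ind_char G {\<one>\<^bsub>G\<^esub>} (carrier G) M) E = cnj (E \<one>\<^bsub>G\<^esub>)"
  proof -
    have one: "\<one>\<^bsub>G\<^esub> \<in> carrier G" using grp by (simp add: group.is_monoid monoid.one_closed)
    have "(\<Sum>g\<in>carrier G. ind_char G {\<one>\<^bsub>G\<^esub>} (carrier G) M g * cnj (E g))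
        = (\<Sum>g\<in>carrier G. if g = \<one>\<^bsub>G\<^esub> then of_nat (card (carrier G)) * cnj (E g) else 0)"
      by (rule sum.cong) (auto simp: ind)
    also have "\<dots> = of_nat (card (carrier G)) * cnj (E \<one>\<^bsub>G\<^esub>)"
      using fin one by (simp add: sum.delta)
    finally show ?thesis unfolding char_inner_def using fin one
      by (auto simp: card_gt_0_iff)
  qed
  have "constituent G (parab G {}) (parab G S) M E"
    unfolding constituent_def parS p0 ci using E1 by simp
  moreover have "atilde G L {} M = (0::'g)" unfolding atilde_def by simp
  ultimately show ?thesis using MI S
    by (intro CollectI exI[of _ "{}"] exI[of _ M]) auto
qed

theorem mainTheorem4:
  fixes G :: "('a, 'b) monoid_scheme" and S :: "'a set"
    and L :: "'a \<Rightarrow> 'g::linordered_ab_group_add"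
  assumes cox: "coxeter_system G S"
    and fin: "finite (carrier G)"
    and wt: "weight_function G S L"
    and pos: "\<forall>s\<in>S. 0 \<le> L s"
  shows "(\<forall>E\<in>Irr G (carrier G).
            (S \<noteq> {} \<longrightarrow> atilde' G L S E \<le> atilde G L S E \<and> 0 \<le> atilde' G L S E) \<and>
            atilde G L S (sgn_twist G S E) - atilde G L S E = omegaL G L S E)
       \<and> (\<forall>J M E. J \<subset> S \<longrightarrow> M \<in> Irr G (parab G J) \<longrightarrow> E \<in> Irr G (carrier G) \<longrightarrow>
            constituent G (parab G J) (carrier G) M E \<longrightarrow> atilde G L J M \<le> atilde G L S E)"
proof -
  have finS: "finite S" using cox fin unfolding coxeter_system_def by (auto intro: finite_subset)
  have parS: "parab G S = carrier G" using cox unfolding coxeter_system_def by auto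
  have ge: "atilde' G L S E \<le> atilde G L S E" if "S \<noteq> {}" for E
    using atilde_unfold[OF finS that, of G L E]
    by (auto split: if_splits simp: not_le less_diff_eq le_diff_eq add.commute intro: less_imp_le)
  have A: "(S \<noteq> {} \<longrightarrow> atilde' G L S E \<le> atilde G L S E \<and> 0 \<le> atilde' G L S E) \<and>
            atilde G L S (sgn_twist G S E) - atilde G L S E = omegaL G L S E"
    if E: "E \<in> Irr G (carrier G)" for E
  proof (intro conjI impI)
    assume "S \<noteq> {}"
    then show "atilde' G L S E \<le> atilde G L S E" by (rule ge)
    show "0 \<le> atilde' G L S E" unfolding atilde'_def
      using Max_set_finite[OF cox fin order_refl, of L E] triv_in_set[OF cox fin \<open>S \<noteq> {}\<close> E, of L]
      by (auto intro: Max_ge)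
  next
    show "atilde G L S (sgn_twist G S E) - atilde G L S E = omegaL G L S E"
    proof (cases "S = {}")
      case True
      then have "reflections G S = {}" unfolding reflections_def by auto
      then have "omegaL G L S E = 0" unfolding omegaL_def refl_classes_def by auto
      with True show ?thesis unfolding atilde_def by simp
    next
      case False
      note u1 = atilde_unfold[OF finS False, of G L E]
      note u2 = atilde_unfold[OF finS False, of G L "sgn_twist G S E", unfolded sgn_twist_twice omega_sgn[OF cox fin E]]
      show ?thesis using u1 u2
        by (auto split: if_splits simp: algebra_simps)
    qed
  qed
  show ?thesis
  proof (rule conjI)
    show "\<forall>E\<in>Irr G (carrier G). (S \<noteq> {} \<longrightarrow> atilde' G L S E \<le> atilde G L S E \<and> 0 \<le> atilde' G L S E) \<and>
            atilde G L S (sgn_twist G S E) - atilde G L S E = omegaL G L S E" using A by blast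
  next
    show "\<forall>J M E. J \<subset> S \<longrightarrow> M \<in> Irr G (parab G J) \<longrightarrow> E \<in> Irr G (carrier G) \<longrightarrow>
            constituent G (parab G J) (carrier G) M E \<longrightarrow> atilde G L J M \<le> atilde G L S E"
    proof (intro allI impI)
    fix J M E assume J: "J \<subset> S" and M: "M \<in> Irr G (parab G J)" and E: "E \<in> Irr G (carrier G)"
      and c: "constituent G (parab G J) (carrier G) M E"
    then have "S \<noteq> {}" by auto
    have "atilde G L J M \<le> atilde' G L S E" unfolding atilde'_def
      using Max_set_finite[OF cox fin order_refl, of L E] J M c parS
      by (intro Max_ge) auto
    also have "\<dots> \<le> atilde G L S E" by (rule ge[OF \<open>S \<noteq> {}\<close>])
    finally show "atilde G L J M \<le> atilde G L S E" .
  qed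
  qed
qed

end
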